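(* Let $X$ be a finite set and $S\subset\mathbb F_X$. Then $S$ is UB-generic if and only if for every $n\in\mathbb N$ there exists $\omega_n\in\mathbb F_X$ such that $\omega_n B_n\subset S$.
   Context: $\mathbb F_X$ is the free group on $X$, $|\omega|$ the reduced word length, $B_n=\{\omega\in\mathbb F_X:|\omega|\le n\}$. The Upper Banach density of $S\subset\mathbb F_X$ is $\overline\mu(S)=\limsup_{n\to\infty}\max_{\omega\in\mathbb F_X}\frac{|S\cap\omega B_n|}{|B_n|}$, and $S$ is UB-generic if $\overline\mu(S)=1$. *)

theory Defs
  imports Complex_Main "HOL-Library.Extended_Real"
begin

text \<open>Free group on a set X, realised as reduced words. A letter is a pair (x, b):
  (x, False) is the generator x, (x, True) is its inverse.\<close>

type_synonym 'a word = "('a \<times> bool) list"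

definition inv_letter :: "'a \<times> bool \<Rightarrow> 'a \<times> bool" where
  "inv_letter l = (fst l, \<not> snd l)"

definition reduced :: "'a word \<Rightarrow> bool" where
  "reduced w \<longleftrightarrow> (\<forall>i. Suc i < length w \<longrightarrow> w ! Suc i \<noteq> inv_letter (w ! i))"

fun reduce :: "'a word \<Rightarrow> 'a word" where
  "reduce [] = []"
| "reduce (a # w) = (case reduce w of
       [] \<Rightarrow> [a]
     | b # r \<Rightarrow> (if b = inv_letter a then r else a # b # r))"

definition fg_mult :: "'a word \<Rightarrow> 'a word \<Rightarrow> 'a word" where
  "fg_mult u v = reduce (u @ v)"

definition free_group :: "'a set \<Rightarrow> 'a word set" where
  "free_group X = {w. set (map fst w) \<subseteq> X \<and> reduced w}"

definition ball_n :: "'a set \<Rightarrow> nat \<Rightarrow> 'a word set" where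
  "ball_n X n = {w \<in> free_group X. length w \<le> n}"

definition left_translate :: "'a word \<Rightarrow> 'a word set \<Rightarrow> 'a word set" where
  "left_translate \<omega> A = fg_mult \<omega> ` A"

definition upper_banach_density :: "'a set \<Rightarrow> 'a word set \<Rightarrow> ereal" where
  "upper_banach_density X S =
     limsup (\<lambda>n. ereal (SUP \<omega>\<in>free_group X.
        real (card (S \<inter> left_translate \<omega> (ball_n X n))) / real (card (ball_n X n))))"

definition UB_generic :: "'a set \<Rightarrow> 'a word set \<Rightarrow> bool" where
  "UB_generic X S \<longleftrightarrow> upper_banach_density X S = 1"

end

theory Submission
  imports Defs
begin

definition cr :: "'a \<times> bool \<Rightarrow> 'a word \<Rightarrow> 'a word" where
  "cr a w = (case w of [] \<Rightarrow> [a] | b # r \<Rightarrow> (if b = inv_letter a then r else a # b # r))"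

lemma reduce_Cons: "reduce (a # w) = cr a (reduce w)"
  by (simp add: cr_def)

declare reduce.simps(2)[simp del]

lemma inv_inv[simp]: "inv_letter (inv_letter a) = a"
  by (simp add: inv_letter_def)

lemma reduced_Nil[simp]: "reduced []"
  by (simp add: reduced_def)

lemma reduced_Cons: "reduced (a # w) \<longleftrightarrow> reduced w \<and> (w \<noteq> [] \<longrightarrow> hd w \<noteq> inv_letter a)"
proof
  assume h: "reduced (a # w)"
  have "reduced w" unfolding reduced_def
  proof (intro allI impI)
    fix i assume "Suc i < length w"
    then show "w ! Suc i \<noteq> inv_letter (w ! i)"
      using h[unfolded reduced_def, rule_format, of "Suc i"] by simp
  qed
  moreover have "w \<noteq> [] \<longrightarrow> hd w \<noteq> inv_letter a"
    using h[unfolded reduced_def, rule_format, of 0] by (cases w) auto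
  ultimately show "reduced w \<and> (w \<noteq> [] \<longrightarrow> hd w \<noteq> inv_letter a)" by blast
next
  assume h: "reduced w \<and> (w \<noteq> [] \<longrightarrow> hd w \<noteq> inv_letter a)"
  show "reduced (a # w)" unfolding reduced_def
  proof (intro allI impI)
    fix i assume i: "Suc i < length (a # w)"
    show "(a # w) ! Suc i \<noteq> inv_letter ((a # w) ! i)"
    proof (cases i)
      case 0 then show ?thesis using h i by (cases w) auto
    next
      case (Suc j) then show ?thesis using h i unfolding reduced_def by auto
    qed
  qed
qed

lemma cr_reduced: "reduced z \<Longrightarrow> reduced (cr a z)"
  by (cases z) (auto simp: cr_def reduced_Cons)

lemma reduce_reduced: "reduced (reduce w)"
  by (induction w) (auto simp: reduce_Cons cr_reduced)

lemma reduce_id: "reduced w \<Longrightarrow> reduce w = w"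
proof (induction w)
  case Nil then show ?case by simp
next
  case (Cons a w)
  then have "reduce w = w" by (simp add: reduced_Cons)
  then show ?case using Cons.prems by (cases w) (auto simp: reduce_Cons cr_def reduced_Cons)
qed

lemma reduce_append: "reduce (u @ v) = foldr cr u (reduce v)"
  by (induction u) (auto simp: reduce_Cons)

lemma foldr_cr_reduced: "reduced z \<Longrightarrow> reduced (foldr cr u z)"
  by (induction u) (auto simp: cr_reduced)

lemma reduce_append_reduce2: "reduce (u @ reduce v) = reduce (u @ v)"
  by (simp add: reduce_append reduce_id reduce_reduced)

lemma cr_cancel: "reduced y \<Longrightarrow> cr a (cr (inv_letter a) y) = y"
proof (cases y)
  case Nil then show ?thesis by (simp add: cr_def inv_letter_def)
next
  case (Cons c y')
  assume r: "reduced y"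
  show ?thesis
  proof (cases "c = a")
    case True
    then have "y' = [] \<or> hd y' \<noteq> inv_letter a" using r Cons by (auto simp: reduced_Cons)
    then show ?thesis using Cons True
      by (cases y') (auto simp: cr_def inv_letter_def)
  next
    case False
    then show ?thesis using Cons by (auto simp: cr_def inv_letter_def)
  qed
qed

lemma foldr_cr_cr: "reduced r \<Longrightarrow> reduced z \<Longrightarrow> foldr cr (cr a r) z = cr a (foldr cr r z)"
proof (cases r)
  case Nil then show ?thesis by (simp add: cr_def)
next
  case (Cons b r')
  assume rr: "reduced r" and rz: "reduced z"
  show ?thesis
  proof (cases "b = inv_letter a")
    case True
    have "reduced (foldr cr r' z)" using rz by (rule foldr_cr_reduced)
    have "cr a r = r'" using Cons True by (simp add: cr_def)
    then show ?thesis using Cons True cr_cancel[OF \<open>reduced (foldr cr r' z)\<close>, of a] by simp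
  next
    case False then show ?thesis using Cons by (simp add: cr_def)
  qed
qed

lemma reduce_append_reduce1: "reduce (reduce u @ v) = reduce (u @ v)"
proof (induction u)
  case Nil then show ?case by simp
next
  case (Cons a u)
  have "reduce (reduce (a # u) @ v) = foldr cr (cr a (reduce u)) (reduce v)"
    by (simp add: reduce_Cons reduce_append)
  also have "\<dots> = cr a (foldr cr (reduce u) (reduce v))"
    by (simp add: foldr_cr_cr reduce_reduced)
  also have "\<dots> = cr a (reduce (reduce u @ v))" by (simp add: reduce_append)
  also have "\<dots> = reduce ((a # u) @ v)" using Cons by (simp add: reduce_Cons)
  finally show ?case .
qed

lemma fg_assoc: "fg_mult (fg_mult u v) w = fg_mult u (fg_mult v w)"
  unfolding fg_mult_def by (simp add: reduce_append_reduce1 reduce_append_reduce2)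

definition winv :: "'a word \<Rightarrow> 'a word" where
  "winv w = rev (map inv_letter w)"

lemma winv_winv[simp]: "winv (winv w) = w"
  by (simp add: winv_def rev_map comp_def)

lemma foldr_inv: "reduced z \<Longrightarrow> foldr cr (winv w) (foldr cr w z) = z"
proof (induction w)
  case Nil then show ?case by (simp add: winv_def)
next
  case (Cons a w)
  have r: "reduced (foldr cr w z)" using Cons.prems by (rule foldr_cr_reduced)
  have "foldr cr (winv (a # w)) (foldr cr (a # w) z)
      = foldr cr (winv w) (cr (inv_letter a) (cr a (foldr cr w z)))"
    by (simp add: winv_def)
  also have "cr (inv_letter a) (cr a (foldr cr w z)) = foldr cr w z"
    using cr_cancel[OF r, of "inv_letter a"] by simp
  finally show ?case using Cons by simp
qed

lemma inv_cancel: "reduce (winv w @ w @ v) = reduce v"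
  by (simp add: reduce_append foldr_inv reduce_reduced)

lemma inv_cancel2: "reduce (w @ winv w @ v) = reduce v"
  using inv_cancel[of "winv w" v] by simp

lemma length_cr: "length (cr a z) \<le> Suc (length z)"
  by (cases z) (auto simp: cr_def)

lemma length_reduce: "length (reduce w) \<le> length w"
proof (induction w)
  case (Cons a w) then show ?case using length_cr[of a "reduce w"] by (simp add: reduce_Cons)
qed simp

lemma set_cr: "set (cr a z) \<subseteq> insert a (set z)"
  by (cases z) (auto simp: cr_def)

lemma set_reduce: "set (reduce w) \<subseteq> set w"
proof (induction w)
  case (Cons a w) then show ?case using set_cr[of a "reduce w"] by (auto simp: reduce_Cons)
qed simp

lemma fg_closed: "u \<in> free_group X \<Longrightarrow> v \<in> free_group X \<Longrightarrow> fg_mult u v \<in> free_group X"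
  using set_reduce[of "u @ v"] unfolding free_group_def fg_mult_def
  by (auto simp: reduce_reduced) force

lemma length_fg: "length (fg_mult u v) \<le> length u + length v"
  using length_reduce[of "u @ v"] by (simp add: fg_mult_def)

lemma fg_inj: "reduced u \<Longrightarrow> reduced v \<Longrightarrow> fg_mult w u = fg_mult w v \<Longrightarrow> u = v"
proof -
  assume ru: "reduced u" and rv: "reduced v" and e: "fg_mult w u = fg_mult w v"
  have "u = reduce (winv w @ reduce (w @ u))"
    by (simp add: reduce_append_reduce2 inv_cancel reduce_id ru)
  also have "\<dots> = reduce (winv w @ reduce (w @ v))" using e by (simp add: fg_mult_def)
  also have "\<dots> = v"
    by (simp add: reduce_append_reduce2 inv_cancel reduce_id rv)
  finally show ?thesis .
qed

lemma reduced_take: "reduced w \<Longrightarrow> reduced (take k w)"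
  unfolding reduced_def by auto

lemma reduced_drop: "reduced w \<Longrightarrow> reduced (drop k w)"
  unfolding reduced_def
proof (intro allI impI)
  fix i assume h: "\<forall>i. Suc i < length w \<longrightarrow> w ! Suc i \<noteq> inv_letter (w ! i)"
    and i: "Suc i < length (drop k w)"
  then have "Suc (k + i) < length w" by simp
  then have "w ! Suc (k + i) \<noteq> inv_letter (w ! (k + i))" using h by blast
  then show "drop k w ! Suc i \<noteq> inv_letter (drop k w ! i)" using i by simp
qed


lemma ball_fin: "finite X \<Longrightarrow> finite (ball_n X n)"
proof -
  assume f: "finite X"
  have "ball_n X n \<subseteq> {w. set w \<subseteq> X \<times> (UNIV::bool set) \<and> length w \<le> n}"
    unfolding ball_n_def free_group_def by auto
  moreover have "finite {w. set w \<subseteq> X \<times> (UNIV::bool set) \<and> length w \<le> n}"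
    using f by (intro finite_lists_length_le) auto
  ultimately show ?thesis by (rule finite_subset)
qed

lemma nil_ball: "[] \<in> ball_n X n"
  by (simp add: ball_n_def free_group_def)

lemma ball_card_pos: "finite X \<Longrightarrow> card (ball_n X n) > 0"
  using ball_fin nil_ball card_gt_0_iff by blast

lemma ball_red: "w \<in> ball_n X n \<Longrightarrow> reduced w"
  by (simp add: ball_n_def free_group_def)

lemma tr_card: "card (left_translate \<omega> (ball_n X n)) = card (ball_n X n)"
  unfolding left_translate_def
  by (rule card_image) (auto intro: inj_onI fg_inj ball_red)

lemma tr_fin: "finite X \<Longrightarrow> finite (left_translate \<omega> (ball_n X n))"
  unfolding left_translate_def using ball_fin by blast

lemma ratio_le1: "finite X \<Longrightarrow>
  real (card (S \<inter> left_translate \<omega> (ball_n X n))) / real (card (ball_n X n)) \<le> 1"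
proof -
  assume f: "finite X"
  have "card (S \<inter> left_translate \<omega> (ball_n X n)) \<le> card (ball_n X n)"
    using card_mono[OF tr_fin[OF f, of \<omega> n] Int_lower2[of S]] tr_card[of \<omega> X n]
    by simp
  then show ?thesis using ball_card_pos[OF f, of n] by simp
qed

lemma ball_mult: "finite X \<Longrightarrow> n \<le> k + m \<Longrightarrow> card (ball_n X n) \<le> card (ball_n X k) * card (ball_n X m)"
proof -
  assume f: "finite X" and nkm: "n \<le> k + m"
  have "ball_n X n \<subseteq> (\<lambda>(p,s). fg_mult p s) ` (ball_n X k \<times> ball_n X m)"
  proof
    fix w assume w: "w \<in> ball_n X n"
    have r: "reduced w" using w by (rule ball_red)
    have "w = fg_mult (take k w) (drop k w)"
      by (simp add: fg_mult_def reduce_id r)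
    moreover have "take k w \<in> ball_n X k" "drop k w \<in> ball_n X m"
      using w nkm unfolding ball_n_def free_group_def
      by (auto simp: reduced_take reduced_drop dest: in_set_takeD in_set_dropD)
    ultimately show "w \<in> (\<lambda>(p,s). fg_mult p s) ` (ball_n X k \<times> ball_n X m)" by force
  qed
  then have "card (ball_n X n) \<le> card ((\<lambda>(p,s). fg_mult p s) ` (ball_n X k \<times> ball_n X m))"
    by (intro card_mono finite_imageI finite_cartesian_product ball_fin f)
  also have "\<dots> \<le> card (ball_n X k \<times> ball_n X m)" by (rule card_image_le)
    (intro finite_cartesian_product ball_fin f)
  finally show ?thesis by (simp add: card_cartesian_product)
qed

lemma key:
  assumes f: "finite X" and no: "\<forall>h\<in>free_group X. \<not> left_translate h (ball_n X N) \<subseteq> S"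
    and om: "\<omega> \<in> free_group X" and Nn: "N \<le> n"
  shows "real (card (S \<inter> left_translate \<omega> (ball_n X n))) / real (card (ball_n X n))
     \<le> 1 - 1 / real (card (ball_n X N))^2"
proof -
  define k where "k = n - N"
  define T where "T = left_translate \<omega> (ball_n X n)"
  define D where "D = T - S"
  define c where "c = card (ball_n X N)"
  have finT: "finite T" unfolding T_def using tr_fin[OF f] .
  have finD: "finite D" unfolding D_def using finT by simp
  have sub: "left_translate \<omega> (ball_n X k) \<subseteq> (\<Union>x\<in>D. (\<lambda>y. fg_mult x (winv y)) ` ball_n X N)"
  proof
    fix h assume "h \<in> left_translate \<omega> (ball_n X k)"
    then obtain v where v: "v \<in> ball_n X k" and hv: "h = fg_mult \<omega> v"
      unfolding left_translate_def by auto
    have hG: "h \<in> free_group X" using hv om v fg_closed unfolding ball_n_def by blast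
    obtain y where y: "y \<in> ball_n X N" and yS: "fg_mult h y \<notin> S"
      using no hG unfolding left_translate_def by blast
    have "fg_mult v y \<in> ball_n X n"
      using v y fg_closed length_fg[of v y] Nn unfolding ball_n_def k_def by fastforce
    then have "fg_mult h y \<in> T" unfolding T_def left_translate_def hv fg_assoc by blast
    then have xD: "fg_mult h y \<in> D" using yS by (simp add: D_def)
    have hr: "reduced h" using hG by (simp add: free_group_def)
    have "fg_mult (fg_mult h y) (winv y) = reduce (h @ reduce (y @ winv y @ []))"
      unfolding fg_mult_def by (simp add: reduce_append_reduce1 reduce_append_reduce2)
    also have "\<dots> = h" by (simp only: inv_cancel2) (simp add: reduce_id hr)
    finally show "h \<in> (\<Union>x\<in>D. (\<lambda>y. fg_mult x (winv y)) ` ball_n X N)"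
      using xD y by force
  qed
  have "card (ball_n X k) = card (left_translate \<omega> (ball_n X k))" by (simp add: tr_card)
  also have "\<dots> \<le> card (\<Union>x\<in>D. (\<lambda>y. fg_mult x (winv y)) ` ball_n X N)"
    using sub finD ball_fin[OF f] by (intro card_mono) auto
  also have "\<dots> \<le> (\<Sum>x\<in>D. card ((\<lambda>y. fg_mult x (winv y)) ` ball_n X N))"
    using finD by (rule card_UN_le)
  also have "\<dots> \<le> (\<Sum>x\<in>D. c)"
    by (intro sum_mono) (simp add: c_def card_image_le ball_fin[OF f])
  finally have kD: "card (ball_n X k) \<le> card D * c" by simp
  have "card (ball_n X n) \<le> card (ball_n X k) * c"
    unfolding c_def using f Nn by (intro ball_mult) (auto simp: k_def)
  also have "\<dots> \<le> card D * c * c" using kD by simp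
  finally have bD: "real (card (ball_n X n)) \<le> real (card D) * real c ^ 2"
    by (simp add: power2_eq_square mult.assoc flip: of_nat_mult)
  have split: "card T = card (S \<inter> T) + card D"
    using card_Int_Diff[OF finT, of S] by (simp add: D_def Int_commute)
  have cT: "card T = card (ball_n X n)" by (simp add: T_def tr_card)
  have bpos: "real (card (ball_n X n)) > 0" using ball_card_pos[OF f] by simp
  have cpos: "real c > 0" using ball_card_pos[OF f] by (simp add: c_def)
  define a where "a = real (card (S \<inter> T))"
  define b where "b = real (card (ball_n X n))"
  define d where "d = real (card D)"
  have e: "a + d = b" using split cT by (simp add: a_def b_def d_def flip: of_nat_add)
  have bd: "b \<le> d * real c ^ 2" using bD by (simp add: b_def d_def)
  have "a / b \<le> 1 - 1 / real c ^ 2"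
  proof -
    have "a / b = 1 - d / b" using e bpos by (simp add: b_def field_simps)
    moreover have "1 / real c ^ 2 \<le> d / b"
      using bd bpos cpos by (simp add: b_def field_simps)
    ultimately show ?thesis by simp
  qed
  then show ?thesis by (simp add: a_def b_def T_def c_def)
qed

theorem proposition2p2:
  fixes X :: "'a set" and S :: "'a word set"
  assumes "finite X" and "S \<subseteq> free_group X"
  shows "UB_generic X S \<longleftrightarrow>
         (\<forall>n::nat. \<exists>\<omega>\<in>free_group X. left_translate \<omega> (ball_n X n) \<subseteq> S)"
proof
  define R where "R = (\<lambda>n \<omega>. real (card (S \<inter> left_translate \<omega> (ball_n X n))) / real (card (ball_n X n)))"
  have G0: "[] \<in> free_group X" by (simp add: free_group_def)
  have le1: "\<And>n \<omega>. R n \<omega> \<le> 1" unfolding R_def using ratio_le1[OF assms(1)] by blast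
  {
    assume gen: "UB_generic X S"
    show "\<forall>n::nat. \<exists>\<omega>\<in>free_group X. left_translate \<omega> (ball_n X n) \<subseteq> S"
    proof (rule ccontr)
      assume "\<not> ?thesis"
      then obtain N where no: "\<forall>h\<in>free_group X. \<not> left_translate h (ball_n X N) \<subseteq> S" by blast
      define q where "q = 1 - 1 / real (card (ball_n X N))^2"
      have "\<forall>n\<ge>N. (SUP \<omega>\<in>free_group X. R n \<omega>) \<le> q"
        using key[OF assms(1) no] G0 unfolding R_def q_def
        by (auto intro!: cSUP_least)
      then have "eventually (\<lambda>n. ereal (SUP \<omega>\<in>free_group X. R n \<omega>) \<le> ereal q) sequentially"
        unfolding eventually_sequentially by auto
      then have "upper_banach_density X S \<le> ereal q"
        unfolding upper_banach_density_def R_def by (rule Limsup_bounded)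
      moreover have "q < 1" using ball_card_pos[OF assms(1), of N] by (simp add: q_def)
      ultimately show False using gen unfolding UB_generic_def by simp
    qed
  }
  {
    assume h: "\<forall>n::nat. \<exists>\<omega>\<in>free_group X. left_translate \<omega> (ball_n X n) \<subseteq> S"
    have "\<And>n. (SUP \<omega>\<in>free_group X. R n \<omega>) = 1"
    proof -
      fix n
      obtain \<omega> where om: "\<omega> \<in> free_group X" and s: "left_translate \<omega> (ball_n X n) \<subseteq> S"
        using h by blast
      have "R n \<omega> = 1" unfolding R_def using s tr_card[of \<omega> X n] ball_card_pos[OF assms(1), of n]
        by (simp add: Int_absorb1)
      moreover have "bdd_above (R n ` free_group X)" using le1 by (auto intro!: bdd_aboveI[where M=1])
      ultimately have "1 \<le> (SUP \<omega>\<in>free_group X. R n \<omega>)"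
        using om by (metis cSUP_upper2 order_refl)
      moreover have "(SUP \<omega>\<in>free_group X. R n \<omega>) \<le> 1" using G0 le1 by (auto intro: cSUP_least)
      ultimately show "(SUP \<omega>\<in>free_group X. R n \<omega>) = 1" by simp
    qed
    then have "upper_banach_density X S = limsup (\<lambda>n. ereal 1)"
      unfolding upper_banach_density_def R_def by simp
    then show "UB_generic X S" unfolding UB_generic_def by (simp add: Limsup_const)
  }
qed

end
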